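(* Every finite group with the Magnus Property is solvable.
   Context: For a group $G$ and $x\in G$, $x^G$ denotes the conjugacy class of $x$ and $\langle x^G\rangle$ the normal closure of $x$ in $G$. A group $G$ has the Magnus Property (MP) if whenever $x,y\in G$ satisfy $\langle x^G\rangle=\langle y^G\rangle$, then $x$ is conjugate in $G$ to $y$ or to $y^{-1}$. *)

theory Defs
  imports "HOL-Algebra.Solvable_Groups" "HOL-Algebra.Generated_Groups"
begin

definition conj_class :: "('a, 'b) monoid_scheme \<Rightarrow> 'a \<Rightarrow> 'a set" where
  "conj_class G x = {g \<otimes>\<^bsub>G\<^esub> x \<otimes>\<^bsub>G\<^esub> inv\<^bsub>G\<^esub> g | g. g \<in> carrier G}"

definition normal_closure :: "('a, 'b) monoid_scheme \<Rightarrow> 'a \<Rightarrow> 'a set" where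
  "normal_closure G x = generate G (conj_class G x)"

definition conjugate :: "('a, 'b) monoid_scheme \<Rightarrow> 'a \<Rightarrow> 'a \<Rightarrow> bool" where
  "conjugate G x y \<longleftrightarrow> (\<exists>g \<in> carrier G. x = g \<otimes>\<^bsub>G\<^esub> y \<otimes>\<^bsub>G\<^esub> inv\<^bsub>G\<^esub> g)"

definition magnus_property :: "('a, 'b) monoid_scheme \<Rightarrow> bool" where
  "magnus_property G \<longleftrightarrow>
     (\<forall>x \<in> carrier G. \<forall>y \<in> carrier G.
        normal_closure G x = normal_closure G y \<longrightarrow>
        conjugate G x y \<or> conjugate G x (inv\<^bsub>G\<^esub> y))"

end

theory Submission
  imports Defs "HOL-Algebra.Multiplicative_Group" "HOL-Algebra.Group_Action" "HOL-Algebra.Sylow" "HOL-Algebra.Zassenhaus"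
begin

context group begin

lemma sub_pow_closed:
  assumes "subgroup N G" "x \<in> N" shows "x [^] (n::nat) \<in> N"
  using assms by (induct n) (auto simp: subgroup.one_closed subgroup.m_closed)

lemma conj_pow:
  assumes "g \<in> carrier G" "x \<in> carrier G"
  shows "(g \<otimes> x \<otimes> inv g) [^] (n::nat) = g \<otimes> (x [^] n) \<otimes> inv g"
proof (induct n)
  case 0 then show ?case using assms by simp
next
  case (Suc n)
  have "(g \<otimes> x \<otimes> inv g) [^] Suc n = (g \<otimes> (x [^] n) \<otimes> inv g) \<otimes> (g \<otimes> x \<otimes> inv g)"
    using Suc by simp
  also have "\<dots> = g \<otimes> (x [^] n \<otimes> x) \<otimes> inv g"
    using assms by (simp add: m_assoc[symmetric]) (simp add: m_assoc)
  finally show ?case by simp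
qed

lemma ord_conj:
  assumes "g \<in> carrier G" "x \<in> carrier G"
  shows "ord (g \<otimes> x \<otimes> inv g) = ord x"
proof -
  have "\<And>n. (ord (g \<otimes> x \<otimes> inv g) dvd n) = (ord x dvd n)"
  proof -
    fix n :: nat
    have "(g \<otimes> x \<otimes> inv g) [^] n = \<one> \<longleftrightarrow> x [^] n = \<one>"
      using assms conj_pow[OF assms, of n]
      by (metis conjugation_is_inj inv_closed nat_pow_closed one_closed r_inv r_one)
    then show "(ord (g \<otimes> x \<otimes> inv g) dvd n) = (ord x dvd n)"
      using assms by (simp add: pow_eq_id)
  qed
  then show ?thesis by (meson dvd_antisym dvd_refl)
qed

lemma central_conj:
  assumes N: "N \<lhd> G" and c: "c \<in> N" "\<forall>z\<in>N. c \<otimes> z = z \<otimes> c" and g: "g \<in> carrier G"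
  shows "g \<otimes> c \<otimes> inv g \<in> N \<and> (\<forall>z\<in>N. (g \<otimes> c \<otimes> inv g) \<otimes> z = z \<otimes> (g \<otimes> c \<otimes> inv g))"
proof -
  interpret N: normal N G by fact
  have cG: "c \<in> carrier G" using c N.subset by auto
  show ?thesis
  proof (intro conjI ballI)
    show "g \<otimes> c \<otimes> inv g \<in> N" by (rule N.inv_op_closed2[OF g c(1)])
  next
    fix z assume z: "z \<in> N"
    have zG: "z \<in> carrier G" using z N.subset by auto
    have w: "inv g \<otimes> z \<otimes> g \<in> N" by (rule N.inv_op_closed1[OF g z])
    then have cw: "c \<otimes> (inv g \<otimes> z \<otimes> g) = (inv g \<otimes> z \<otimes> g) \<otimes> c" using c(2) by auto
    have "(g \<otimes> c \<otimes> inv g) \<otimes> z = g \<otimes> (c \<otimes> (inv g \<otimes> z \<otimes> g)) \<otimes> inv g"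
      using g zG cG by (simp add: m_assoc)
    also have "\<dots> = g \<otimes> ((inv g \<otimes> z \<otimes> g) \<otimes> c) \<otimes> inv g" using cw by simp
    also have "\<dots> = z \<otimes> (g \<otimes> c \<otimes> inv g)"
      using g zG cG by (simp add: m_assoc[symmetric])
    finally show "(g \<otimes> c \<otimes> inv g) \<otimes> z = z \<otimes> (g \<otimes> c \<otimes> inv g)" .
  qed
qed

lemma central_inv:
  assumes N: "subgroup N G" and c: "c \<in> N" "\<forall>z\<in>N. c \<otimes> z = z \<otimes> c"
  shows "inv c \<in> N \<and> (\<forall>z\<in>N. inv c \<otimes> z = z \<otimes> inv c)"
proof (intro conjI ballI)
  show "inv c \<in> N" by (rule subgroup.m_inv_closed[OF N c(1)])
next
  fix z assume z: "z \<in> N"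
  have cG: "c \<in> carrier G" "z \<in> carrier G" using subgroup.mem_carrier[OF N c(1)] subgroup.mem_carrier[OF N z] by auto
  have eq: "c \<otimes> z = z \<otimes> c" using c(2) z by auto
  have "inv c \<otimes> z = inv c \<otimes> (z \<otimes> c) \<otimes> inv c" using cG by (simp add: m_assoc)
  also have "\<dots> = inv c \<otimes> (c \<otimes> z) \<otimes> inv c" using eq by simp
  also have "\<dots> = z \<otimes> inv c" using cG by (simp add: m_assoc[symmetric])
  finally show "inv c \<otimes> z = z \<otimes> inv c" .
qed

lemma conj_cancel:
  assumes "g \<in> carrier G" "y \<in> carrier G"
  shows "inv g \<otimes> (g \<otimes> y \<otimes> inv g) \<otimes> inv (inv g) = y"
  using assms by (simp add: m_assoc[symmetric]) (simp add: m_assoc)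

lemma lemmaA:
  assumes fin: "finite (carrier G)" and N: "N \<lhd> G" and perf: "derived G N = N"
    and nt: "N \<noteq> {\<one>}" and xN: "x \<in> N"
    and cov: "\<And>y. y \<in> N \<Longrightarrow> y \<noteq> \<one> \<Longrightarrow> \<exists>g\<in>carrier G. y = g \<otimes> x \<otimes> inv g \<or> y = g \<otimes> inv x \<otimes> inv g"
  shows False
proof -
  interpret N: normal N G by fact
  have NG: "N \<subseteq> carrier G" by (rule N.subset)
  have xG: "x \<in> carrier G" using xN NG by auto
  have oneN: "\<one> \<in> N" by (rule N.one_closed)
  obtain y0 where y0: "y0 \<in> N" "y0 \<noteq> \<one>" using nt oneN by auto
  have x1: "x \<noteq> \<one>"
  proof
    assume "x = \<one>"
    then obtain g where "g \<in> carrier G" "y0 = g \<otimes> \<one> \<otimes> inv g \<or> y0 = g \<otimes> inv \<one> \<otimes> inv g"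
      using cov[OF y0] by auto
    then show False using y0(2) by auto
  qed
  have ordN: "\<And>y. y \<in> N \<Longrightarrow> y \<noteq> \<one> \<Longrightarrow> ord y = ord x"
  proof -
    fix y assume "y \<in> N" "y \<noteq> \<one>"
    then obtain g where g: "g \<in> carrier G" "y = g \<otimes> x \<otimes> inv g \<or> y = g \<otimes> inv x \<otimes> inv g"
      using cov by blast
    then show "ord y = ord x"
      using ord_conj[OF g(1) xG] ord_conj[OF g(1) inv_closed[OF xG]] ord_inv[OF xG] by auto
  qed
  define p where "p = ord x"
  have p0: "p > 0" using ord_ge_1[OF fin xG] p_def by simp
  have p1: "p \<noteq> 1" using ord_eq_1[OF xG] x1 p_def by simp
  have pprime: "prime p"
  proof -
    have "\<forall>d. d dvd p \<longrightarrow> d = 1 \<or> d = p"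
    proof (intro allI impI)
      fix d assume d: "d dvd p"
      show "d = 1 \<or> d = p"
      proof (rule ccontr)
        assume nd: "\<not> (d = 1 \<or> d = p)"
        have d0: "d \<noteq> 0" using d p0 by auto
        have xd: "x [^] d \<in> N" by (rule sub_pow_closed[OF N.subgroup_axioms xN])
        have xd1: "x [^] d \<noteq> \<one>"
        proof
          assume "x [^] d = \<one>"
          then have "p dvd d" using pow_eq_id[OF xG] p_def by simp
          then show False using d nd by (simp add: dvd_antisym)
        qed
        have "ord (x [^] d) = p div d" using ord_pow[OF xG _ d0] d p_def by simp
        moreover have "ord (x [^] d) = p" using ordN[OF xd xd1] p_def by simp
        ultimately have "p div d = p" by simp
        moreover have "p div d < p" using d0 nd p0 by (intro div_less_dividend) auto
        ultimately show False by simp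
      qed
    qed
    then show ?thesis using p0 p1 prime_nat_iff by auto
  qed
  define H where "H = G\<lparr>carrier := N\<rparr>"
  have grpH: "group H" unfolding H_def by (rule subgroup_imp_group[OF N.subgroup_axioms])
  have finN: "finite N" using fin NG finite_subset by auto
  have primes: "\<And>q. prime q \<Longrightarrow> q dvd card N \<Longrightarrow> q = p"
  proof -
    fix q :: nat assume q: "prime q" "q dvd card N"
    have oH: "order H = q ^ 1 * (card N div q)" using q(2) unfolding order_def H_def by simp
    obtain S where S: "subgroup S H" "card S = q ^ 1"
      using sylow_thm[OF q(1) grpH oH] finN H_def by auto
    have SN: "S \<subseteq> N" using subgroup.subset[OF S(1)] H_def by simp
    have oneS: "\<one> \<in> S" using subgroup.one_closed[OF S(1)] H_def by simp
    have "card S > 1" using S(2) prime_gt_1_nat[OF q(1)] by simp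
    then have "S \<noteq> {\<one>}" by auto
    then obtain s where s: "s \<in> S" "s \<noteq> \<one>" using oneS by auto
    have sN: "s \<in> N" using s SN by auto
    have grpK: "group (G\<lparr>carrier := S\<rparr>)"
      using group.subgroup_imp_group[OF grpH S(1)] H_def by simp
    have "s [^]\<^bsub>G\<lparr>carrier := S\<rparr>\<^esub> order (G\<lparr>carrier := S\<rparr>) = \<one>\<^bsub>G\<lparr>carrier := S\<rparr>\<^esub>"
      using group.pow_order_eq_1[OF grpK] s(1) by simp
    then have "s [^] q = \<one>" using S(2) unfolding order_def by (simp add: nat_pow_consistent[symmetric])
    then have "ord s dvd q" using pow_eq_id sN NG by auto
    then have "p dvd q" using ordN[OF sN s(2)] p_def by simp
    then show "q = p" using primes_dvd_imp_eq[OF pprime q(1)] by simp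
  qed
  have nocent: "\<And>y. y \<in> N \<Longrightarrow> y \<noteq> \<one> \<Longrightarrow> \<exists>z\<in>N. y \<otimes> z \<noteq> z \<otimes> y"
  proof (rule ccontr)
    fix y assume y: "y \<in> N" "y \<noteq> \<one>" and nz: "\<not> (\<exists>z\<in>N. y \<otimes> z \<noteq> z \<otimes> y)"
    have yc: "\<forall>z\<in>N. y \<otimes> z = z \<otimes> y" using nz by auto
    obtain g where g: "g \<in> carrier G" "y = g \<otimes> x \<otimes> inv g \<or> y = g \<otimes> inv x \<otimes> inv g"
      using cov[OF y] by blast
    have yG: "y \<in> carrier G" using y NG by auto
    have c1: "inv g \<otimes> y \<otimes> inv (inv g) \<in> N \<and> (\<forall>z\<in>N. (inv g \<otimes> y \<otimes> inv (inv g)) \<otimes> z = z \<otimes> (inv g \<otimes> y \<otimes> inv (inv g)))"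
      by (rule central_conj[OF N y(1) yc inv_closed[OF g(1)]])
    have xc: "\<forall>z\<in>N. x \<otimes> z = z \<otimes> x"
      using g(2)
    proof
      assume "y = g \<otimes> x \<otimes> inv g"
      then have "inv g \<otimes> y \<otimes> inv (inv g) = x" using conj_cancel[OF g(1) xG] by simp
      then show ?thesis using c1 by simp
    next
      assume "y = g \<otimes> inv x \<otimes> inv g"
      then have "inv g \<otimes> y \<otimes> inv (inv g) = inv x" using conj_cancel[OF g(1) inv_closed[OF xG]] by simp
      then have "inv x \<in> N" "\<forall>z\<in>N. inv x \<otimes> z = z \<otimes> inv x" using c1 by simp_all
      then have "inv (inv x) \<in> N \<and> (\<forall>z\<in>N. inv (inv x) \<otimes> z = z \<otimes> inv (inv x))"
        by (intro central_inv[OF N.subgroup_axioms])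
      then show ?thesis using xG by simp
    qed
    have xic: "\<forall>z\<in>N. inv x \<otimes> z = z \<otimes> inv x"
      using central_inv[OF N.subgroup_axioms xN xc] by simp
    have allc: "\<And>w z. w \<in> N \<Longrightarrow> z \<in> N \<Longrightarrow> w \<otimes> z = z \<otimes> w"
    proof -
      fix w z assume w: "w \<in> N" and z: "z \<in> N"
      show "w \<otimes> z = z \<otimes> w"
      proof (cases "w = \<one>")
        case True then show ?thesis using z NG by auto
      next
        case False
        then obtain h where h: "h \<in> carrier G" "w = h \<otimes> x \<otimes> inv h \<or> w = h \<otimes> inv x \<otimes> inv h"
          using cov[OF w] by blast
        from h(2) show ?thesis
        proof
          assume "w = h \<otimes> x \<otimes> inv h"
          then show ?thesis using central_conj[OF N xN xc h(1)] z by simp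
        next
          assume "w = h \<otimes> inv x \<otimes> inv h"
          then show ?thesis using central_conj[OF N N.m_inv_closed[OF xN] xic h(1)] z by simp
        qed
      qed
    qed
    have "derived_set G N \<subseteq> {\<one>}"
    proof
      fix a assume "a \<in> derived_set G N"
      then obtain h1 h2 where hh: "h1 \<in> N" "h2 \<in> N" "a = h1 \<otimes> h2 \<otimes> inv h1 \<otimes> inv h2" by auto
      have hG: "h1 \<in> carrier G" "h2 \<in> carrier G" using hh NG by auto
      have "a = h2 \<otimes> h1 \<otimes> inv h1 \<otimes> inv h2" using hh allc by simp
      also have "\<dots> = \<one>" using hG by (simp add: m_assoc)
      finally show "a \<in> {\<one>}" by simp
    qed
    then have "derived G N \<subseteq> {\<one>}"
      unfolding derived_def by (rule generate_subgroup_incl[OF _ triv_subgroup])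
    then show False using perf nt oneN by auto
  qed
  define \<phi> where "\<phi> = (\<lambda>g. \<lambda>h\<in>carrier H. g \<otimes>\<^bsub>H\<^esub> h \<otimes>\<^bsub>H\<^esub> inv\<^bsub>H\<^esub> g)"
  interpret A: group_action H "carrier H" \<phi>
    unfolding \<phi>_def by (rule group.action_by_conjugation[OF grpH])
  have cH: "carrier H = N" by (simp add: H_def)
  have mH: "\<And>a b. a \<otimes>\<^bsub>H\<^esub> b = a \<otimes> b" by (simp add: H_def)
  have iH: "\<And>a. a \<in> N \<Longrightarrow> inv\<^bsub>H\<^esub> a = inv a"
    unfolding H_def by (rule m_inv_consistent[OF N.subgroup_axioms])
  have phi: "\<And>g h. g \<in> N \<Longrightarrow> h \<in> N \<Longrightarrow> \<phi> g h = g \<otimes> h \<otimes> inv g"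
    using cH mH iH \<phi>_def by simp
  have orb: "\<And>y. y \<in> N \<Longrightarrow> orbit H \<phi> y = {g \<otimes> y \<otimes> inv g | g. g \<in> N}"
  proof -
    fix y assume y: "y \<in> N"
    have "orbit H \<phi> y = {\<phi> g y | g. g \<in> N}" by (simp add: orbit_def cH)
    also have "\<dots> = {g \<otimes> y \<otimes> inv g | g. g \<in> N}"
    proof (intro Collect_cong iffI)
      fix w assume "\<exists>g. w = \<phi> g y \<and> g \<in> N"
      then obtain g where "w = \<phi> g y" "g \<in> N" by blast
      then show "\<exists>g. w = g \<otimes> y \<otimes> inv g \<and> g \<in> N" using phi y by auto
    next
      fix w assume "\<exists>g. w = g \<otimes> y \<otimes> inv g \<and> g \<in> N"
      then obtain g where "w = g \<otimes> y \<otimes> inv g" "g \<in> N" by blast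
      then have "w = \<phi> g y \<and> g \<in> N" using phi y by auto
      then show "\<exists>g. w = \<phi> g y \<and> g \<in> N" by blast
    qed
    finally show "orbit H \<phi> y = {g \<otimes> y \<otimes> inv g | g. g \<in> N}" .
  qed
  have orbsub: "\<And>y. y \<in> N \<Longrightarrow> orbit H \<phi> y \<subseteq> N"
  proof
    fix y w assume y: "y \<in> N" and w: "w \<in> orbit H \<phi> y"
    then obtain g where g: "g \<in> N" "w = g \<otimes> y \<otimes> inv g" using orb by auto
    have "g \<in> carrier G" using g NG by auto
    then show "w \<in> N" using g N.inv_op_closed2[OF _ y] by simp
  qed
  have orbdvd: "\<And>y. y \<in> N \<Longrightarrow> card (orbit H \<phi> y) dvd card N"
  proof -
    fix y assume y: "y \<in> N"
    have "card (orbit H \<phi> y) * card (stabilizer H \<phi> y) = order H"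
      using A.orbit_stabilizer_theorem[of y] y cH by simp
    then have "card (orbit H \<phi> y) * card (stabilizer H \<phi> y) = card N"
      unfolding order_def using cH by simp
    then show "card (orbit H \<phi> y) dvd card N" using dvd_triv_left by metis
  qed
  have orb1: "orbit H \<phi> \<one> = {\<one>}"
  proof (rule equalityI)
    show "orbit H \<phi> \<one> \<subseteq> {\<one>}"
    proof
      fix w assume "w \<in> orbit H \<phi> \<one>"
      then obtain g where g: "g \<in> N" "w = g \<otimes> \<one> \<otimes> inv g" using orb[OF oneN] by blast
      then have "g \<in> carrier G" using NG by auto
      then show "w \<in> {\<one>}" using g by simp
    qed
    show "{\<one>} \<subseteq> orbit H \<phi> \<one>" using A.orbit_refl[of "\<one>"] oneN cH by simp
  qed
  have pdiv: "\<And>y. y \<in> N \<Longrightarrow> y \<noteq> \<one> \<Longrightarrow> p dvd card (orbit H \<phi> y)"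
  proof -
    fix y assume y: "y \<in> N" "y \<noteq> \<one>"
    have yG: "y \<in> carrier G" using y NG by auto
    have fo: "finite (orbit H \<phi> y)" using orbsub[OF y(1)] finN finite_subset by auto
    have yin: "y \<in> orbit H \<phi> y" using A.orbit_refl[of y] y cH by simp
    have c1: "card (orbit H \<phi> y) \<noteq> 1"
    proof
      assume "card (orbit H \<phi> y) = 1"
      then obtain a where "orbit H \<phi> y = {a}" by (rule card_1_singletonE)
      then have o1: "orbit H \<phi> y = {y}" using yin by simp
      have "\<forall>z\<in>N. y \<otimes> z = z \<otimes> y"
      proof
        fix z assume z: "z \<in> N"
        have zG: "z \<in> carrier G" using z NG by auto
        have "z \<otimes> y \<otimes> inv z \<in> orbit H \<phi> y" using orb[OF y(1)] z by auto
        then have e: "z \<otimes> y \<otimes> inv z = y" using o1 by simp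
        have "z \<otimes> y = z \<otimes> y \<otimes> inv z \<otimes> z" using zG yG by (simp add: m_assoc)
        also have "\<dots> = y \<otimes> z" using e by simp
        finally show "y \<otimes> z = z \<otimes> y" by simp
      qed
      then show False using nocent[OF y] by auto
    qed
    have "card (orbit H \<phi> y) \<noteq> 0" using fo yin by auto
    then obtain q where q: "prime q" "q dvd card (orbit H \<phi> y)" using prime_factor_nat[OF c1] by blast
    then have "q dvd card N" using dvd_trans[OF q(2) orbdvd[OF y(1)]] by simp
    then have "q = p" using primes[OF q(1)] by simp
    then show "p dvd card (orbit H \<phi> y)" using q by simp
  qed
  have sumeq: "(\<Sum>orb\<in>orbits H N \<phi>. card orb) = card N"
    using A.disjoint_sum[of "\<lambda>_. (1::nat)"] finN cH by simp
  have finO: "finite (orbits H N \<phi>)"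
  proof (rule finite_subset)
    show "orbits H N \<phi> \<subseteq> Pow N" unfolding orbits_def using orbsub by auto
    show "finite (Pow N)" using finN by simp
  qed
  have oneO: "{\<one>} \<in> orbits H N \<phi>" unfolding orbits_def using orb1 oneN by auto
  have split: "card N = card {\<one>} + (\<Sum>orb\<in>orbits H N \<phi> - {{\<one>}}. card orb)"
    using sum.remove[OF finO oneO, of card] sumeq by simp
  have pS: "p dvd (\<Sum>orb\<in>orbits H N \<phi> - {{\<one>}}. card orb)"
  proof (rule dvd_sum)
    fix orb assume "orb \<in> orbits H N \<phi> - {{\<one>}}"
    then obtain y where y: "y \<in> N" "orb = orbit H \<phi> y" "orb \<noteq> {\<one>}" unfolding orbits_def by auto
    then have "y \<noteq> \<one>" using orb1 by auto
    then show "p dvd card orb" using pdiv y by simp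
  qed
  have cN1: "card N \<noteq> 1"
  proof
    assume "card N = 1"
    then obtain a where "N = {a}" by (rule card_1_singletonE)
    then show False using y0 oneN by auto
  qed
  obtain q where q: "prime q" "q dvd card N" using prime_factor_nat[OF cN1] by blast
  then have "p dvd card N" using primes[OF q] by simp
  then have "p dvd card N - (\<Sum>orb\<in>orbits H N \<phi> - {{\<one>}}. card orb)"
    using dvd_diff_nat pS by blast
  then have "p dvd 1" using split by simp
  then show False using p1 by simp
qed

lemma nc_normal:
  assumes "y \<in> carrier G" shows "normal_closure G y \<lhd> G"
  unfolding normal_closure_def
proof (rule normal_generateI)
  show "conj_class G y \<subseteq> carrier G" unfolding conj_class_def using assms by auto
next
  fix h g assume h: "h \<in> conj_class G y" and g: "g \<in> carrier G"
  then obtain a where a: "a \<in> carrier G" "h = a \<otimes> y \<otimes> inv a" unfolding conj_class_def by auto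
  have "g \<otimes> h \<otimes> inv g = (g \<otimes> a) \<otimes> y \<otimes> inv (g \<otimes> a)"
    using a g assms by (simp add: m_assoc inv_mult_group)
  then show "g \<otimes> h \<otimes> inv g \<in> conj_class G y" unfolding conj_class_def using a g by blast
qed

lemma nc_in:
  assumes "y \<in> carrier G" shows "y \<in> normal_closure G y"
proof -
  have "y = \<one> \<otimes> y \<otimes> inv \<one>" using assms by simp
  then have "y \<in> conj_class G y" unfolding conj_class_def by blast
  then show ?thesis unfolding normal_closure_def by (rule generate.incl)
qed

lemma nc_min:
  assumes M: "M \<lhd> G" and y: "y \<in> M" shows "normal_closure G y \<subseteq> M"
  unfolding normal_closure_def
proof (rule generate_subgroup_incl)
  interpret M: normal M G by fact
  show "subgroup M G" by (rule M.subgroup_axioms)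
  show "conj_class G y \<subseteq> M"
  proof
    fix h assume "h \<in> conj_class G y"
    then obtain a where a: "a \<in> carrier G" "h = a \<otimes> y \<otimes> inv a" unfolding conj_class_def by auto
    then show "h \<in> M" using M.inv_op_closed2[OF a(1) y] by simp
  qed
qed

lemma perfect_exists:
  assumes fin: "finite (carrier G)" and ns: "\<not> solvable G"
  shows "\<exists>D. D \<lhd> G \<and> derived G D = D \<and> D \<noteq> {\<one>}"
proof -
  define Ds where "Ds n = (derived G ^^ n) (carrier G)" for n
  have Dnorm: "Ds n \<lhd> G" for n
  proof (induct n)
    case 0 then show ?case by (simp add: Ds_def normal_self)
  next
    case (Suc n) then show ?case by (simp add: Ds_def derived_is_normal)
  qed
  have DSuc: "Ds (Suc n) = derived G (Ds n)" for n by (simp add: Ds_def)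
  have Dne: "Ds n \<noteq> {\<one>}" for n using ns solvable_iff_trivial_derived_seq Ds_def by auto
  have Dsub: "Ds (Suc n) \<subseteq> Ds n" for n
    using derived_incl[OF subset_refl normal_imp_subgroup[OF Dnorm[of n]]] DSuc by simp
  have DG: "Ds n \<subseteq> carrier G" for n by (rule subgroup.subset[OF normal_imp_subgroup[OF Dnorm[of n]]])
  show ?thesis
  proof (rule ccontr)
    assume nt: "\<not> (\<exists>D. D \<lhd> G \<and> derived G D = D \<and> D \<noteq> {\<one>})"
    have neq: "Ds (Suc n) \<noteq> Ds n" for n
    proof
      assume "Ds (Suc n) = Ds n"
      then have "Ds n \<lhd> G \<and> derived G (Ds n) = Ds n \<and> Ds n \<noteq> {\<one>}" using Dnorm Dne DSuc by simp
      then show False using nt by blast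
    qed
    have lt: "card (Ds (Suc n)) < card (Ds n)" for n
      by (rule psubset_card_mono[OF finite_subset[OF DG fin]]) (use Dsub neq in blast)
    have "card (Ds n) + n \<le> card (carrier G)" for n
    proof (induct n)
      case 0 then show ?case by (simp add: Ds_def)
    next
      case (Suc n) then show ?case using lt[of n] by simp
    qed
    from this[of "Suc (card (carrier G))"] show False by simp
  qed
qed

lemma main_solvable:
  assumes fin: "finite (carrier G)" and mp: "magnus_property G"
  shows "solvable G"
proof (rule ccontr)
  assume ns: "\<not> solvable G"
  obtain D where Dn: "D \<lhd> G" and perf: "derived G D = D" and Dnt: "D \<noteq> {\<one>}"
    using perfect_exists[OF fin ns] by blast
  interpret Dn: normal D G by (rule Dn)
  have DG: "D \<subseteq> carrier G" by (rule Dn.subset)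
  define LL where "LL = {L. L \<lhd> G \<and> L \<subseteq> D \<and> L \<noteq> D}"
  have finLL: "finite LL"
  proof (rule finite_subset)
    show "LL \<subseteq> Pow (carrier G)" unfolding LL_def using DG by auto
    show "finite (Pow (carrier G))" using fin by simp
  qed
  have oneLL: "{\<one>} \<in> LL" unfolding LL_def using one_is_normal Dn.one_closed Dnt by auto
  obtain L where L: "L \<in> LL" and Lmax: "\<forall>M\<in>LL. L \<subseteq> M \<longrightarrow> L = M"
    using finite_has_maximal[OF finLL] oneLL by blast
  have Ln: "L \<lhd> G" and LD: "L \<subseteq> D" and LneD: "L \<noteq> D" using L unfolding LL_def by auto
  interpret Ln: normal L G by (rule Ln)
  define KK where "KK = {normal_closure G y | y. y \<in> D - L}"
  have finKK: "finite KK"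
  proof (rule finite_subset)
    show "KK \<subseteq> Pow (carrier G)" unfolding KK_def
      using nc_min[OF Dn] DG by auto
    show "finite (Pow (carrier G))" using fin by simp
  qed
  have "KK \<noteq> {}" unfolding KK_def using LD LneD by auto
  then obtain K where K: "K \<in> KK" and Kmin: "\<forall>M\<in>KK. M \<subseteq> K \<longrightarrow> K = M"
    using finite_has_minimal[OF finKK] by blast
  obtain x where x: "x \<in> D" "x \<notin> L" and Kx: "K = normal_closure G x"
    using K unfolding KK_def by auto
  have xG: "x \<in> carrier G" using x DG by auto
  have Kn: "K \<lhd> G" using nc_normal[OF xG] Kx by simp
  interpret Kn: normal K G by (rule Kn)
  have KD: "K \<subseteq> D" using nc_min[OF Dn x(1)] Kx by simp
  have xK: "x \<in> K" using nc_in[OF xG] Kx by simp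
  have conjK: "\<And>k. k \<in> K \<Longrightarrow> k \<notin> L \<Longrightarrow> \<exists>g\<in>carrier G. k = g \<otimes> x \<otimes> inv g \<or> k = g \<otimes> inv x \<otimes> inv g"
  proof -
    fix k assume k: "k \<in> K" "k \<notin> L"
    have kD: "k \<in> D" using k KD by auto
    have kG: "k \<in> carrier G" using kD DG by auto
    have "normal_closure G k \<in> KK" unfolding KK_def using kD k(2) by auto
    moreover have "normal_closure G k \<subseteq> K" using nc_min[OF Kn k(1)] .
    ultimately have "K = normal_closure G k" using Kmin by blast
    then have "normal_closure G k = normal_closure G x" using Kx by simp
    then have "conjugate G k x \<or> conjugate G k (inv x)"
      using mp kG xG unfolding magnus_property_def by blast
    then show "\<exists>g\<in>carrier G. k = g \<otimes> x \<otimes> inv g \<or> k = g \<otimes> inv x \<otimes> inv g"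
      unfolding conjugate_def by blast
  qed
  have KLD: "K <#> L = D"
  proof (rule ccontr)
    assume ne: "K <#> L \<noteq> D"
    have KLs: "subgroup (K <#> L) G" by (rule mult_norm_subgroup[OF Kn Ln.subgroup_axioms])
    have KLn: "K <#> L \<lhd> G"
      unfolding normal_inv_iff
    proof (intro conjI ballI)
      show "subgroup (K <#> L) G" by (rule KLs)
    next
      fix g h assume g: "g \<in> carrier G" and h: "h \<in> K <#> L"
      then obtain k l where kl: "k \<in> K" "l \<in> L" "h = k \<otimes> l" unfolding set_mult_def by auto
      have kG: "k \<in> carrier G" using kl(1) Kn.subset by auto
      have lG: "l \<in> carrier G" using kl(2) Ln.subset by auto
      have "g \<otimes> h \<otimes> inv g = (g \<otimes> k \<otimes> inv g) \<otimes> (g \<otimes> l \<otimes> inv g)"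
        using g kG lG kl(3) by (simp add: m_assoc) (simp add: m_assoc[symmetric])
      moreover have "g \<otimes> k \<otimes> inv g \<in> K" by (rule Kn.inv_op_closed2[OF g kl(1)])
      moreover have "g \<otimes> l \<otimes> inv g \<in> L" by (rule Ln.inv_op_closed2[OF g kl(2)])
      ultimately show "g \<otimes> h \<otimes> inv g \<in> K <#> L" unfolding set_mult_def by auto
    qed
    have LKL: "L \<subseteq> K <#> L"
    proof
      fix l assume l: "l \<in> L"
      have "l = \<one> \<otimes> l" using l Ln.subset by auto
      moreover have "\<one> \<otimes> l \<in> K <#> L" unfolding set_mult_def
        by (rule UN_I[OF Kn.one_closed], rule UN_I[OF l], simp)
      ultimately show "l \<in> K <#> L" by simp
    qed
    have KLsubD: "K <#> L \<subseteq> D"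
    proof
      fix h assume "h \<in> K <#> L"
      then obtain k l where kl: "k \<in> K" "l \<in> L" "h = k \<otimes> l" unfolding set_mult_def by auto
      have "k \<in> D" "l \<in> D" using kl KD LD by auto
      then show "h \<in> D" using kl(3) Dn.m_closed by simp
    qed
    have "K <#> L \<in> LL" unfolding LL_def using KLn KLsubD ne by simp
    then have "L = K <#> L" using Lmax LKL by blast
    moreover have "x \<in> K <#> L"
    proof -
      have "x = x \<otimes> \<one>" using xG by simp
      moreover have "x \<otimes> \<one> \<in> K <#> L" unfolding set_mult_def
        by (rule UN_I[OF xK], rule UN_I[OF Ln.one_closed], simp)
      ultimately show ?thesis by simp
    qed
    ultimately show False using x(2) by simp
  qed
  define Q where "Q = G Mod L"
  define h where "h = (\<lambda>a. L #> a)"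
  have grpQ: "group Q" unfolding Q_def by (rule Ln.factorgroup_is_group)
  interpret HQ: group_hom G Q h
    unfolding group_hom_def group_hom_axioms_def Q_def h_def
    using is_group Ln.factorgroup_is_group Ln.r_coset_hom_Mod by simp
  have cQ: "carrier Q = h ` carrier G" unfolding Q_def h_def by (rule carrier_FactGroup)
  have oneQ: "\<one>\<^bsub>Q\<^esub> = L" unfolding Q_def by simp
  have finQ: "finite (carrier Q)" using cQ fin by simp
  have NQ: "h ` D \<lhd> Q"
    unfolding group.normal_inv_iff[OF grpQ]
  proof (intro conjI ballI)
    show "subgroup (h ` D) Q" by (rule HQ.subgroup_img_is_subgroup[OF Dn.subgroup_axioms])
  next
    fix q n assume q: "q \<in> carrier Q" and n: "n \<in> h ` D"
    obtain g where g: "g \<in> carrier G" "q = h g" using q cQ by auto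
    obtain d where d: "d \<in> D" "n = h d" using n by auto
    have dG: "d \<in> carrier G" using d(1) DG by auto
    have "q \<otimes>\<^bsub>Q\<^esub> n \<otimes>\<^bsub>Q\<^esub> inv\<^bsub>Q\<^esub> q = h (g \<otimes> d \<otimes> inv g)"
      using g d dG by simp
    moreover have "g \<otimes> d \<otimes> inv g \<in> D" by (rule Dn.inv_op_closed2[OF g(1) d(1)])
    ultimately show "q \<otimes>\<^bsub>Q\<^esub> n \<otimes>\<^bsub>Q\<^esub> inv\<^bsub>Q\<^esub> q \<in> h ` D" by simp
  qed
  have perfQ: "derived Q (h ` D) = h ` D" using HQ.derived_img[OF DG] perf by simp
  have hxN: "h x \<in> h ` D" using x(1) by simp
  have hL: "\<And>a. a \<in> carrier G \<Longrightarrow> h a = \<one>\<^bsub>Q\<^esub> \<longleftrightarrow> a \<in> L"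
  proof -
    fix a assume a: "a \<in> carrier G"
    show "h a = \<one>\<^bsub>Q\<^esub> \<longleftrightarrow> a \<in> L"
    proof
      assume "h a = \<one>\<^bsub>Q\<^esub>"
      then have "L #> a = L" using oneQ h_def by simp
      then show "a \<in> L" using rcos_self[OF a Ln.subgroup_axioms] by simp
    next
      assume "a \<in> L"
      then show "h a = \<one>\<^bsub>Q\<^esub>" using oneQ h_def Ln.rcos_const[OF is_group] by simp
    qed
  qed
  have ntQ: "h ` D \<noteq> {\<one>\<^bsub>Q\<^esub>}" using hxN hL[OF xG] x(2) by auto
  have covQ: "\<And>y. y \<in> h ` D \<Longrightarrow> y \<noteq> \<one>\<^bsub>Q\<^esub> \<Longrightarrow>
      \<exists>g\<in>carrier Q. y = g \<otimes>\<^bsub>Q\<^esub> h x \<otimes>\<^bsub>Q\<^esub> inv\<^bsub>Q\<^esub> g \<or> y = g \<otimes>\<^bsub>Q\<^esub> inv\<^bsub>Q\<^esub> h x \<otimes>\<^bsub>Q\<^esub> inv\<^bsub>Q\<^esub> g"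
  proof -
    fix y assume y: "y \<in> h ` D" "y \<noteq> \<one>\<^bsub>Q\<^esub>"
    obtain d where d: "d \<in> D" "y = h d" using y(1) by auto
    have dG: "d \<in> carrier G" using d(1) DG by auto
    have dL: "d \<notin> L" using hL[OF dG] d y(2) by simp
    have "d \<in> K <#> L" using d(1) KLD by simp
    then obtain k l where kl: "k \<in> K" "l \<in> L" "d = k \<otimes> l" unfolding set_mult_def by auto
    have kG: "k \<in> carrier G" using kl(1) Kn.subset by auto
    have lG: "l \<in> carrier G" using kl(2) Ln.subset by auto
    have kL: "k \<notin> L"
    proof
      assume "k \<in> L"
      then have "k \<otimes> l \<in> L" using kl(2) Ln.m_closed by simp
      then show False using dL kl(3) by simp
    qed
    have hl: "h l = \<one>\<^bsub>Q\<^esub>" using hL[OF lG] kl(2) by simp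
    have hd: "h d = h k" using kl(3) kG lG hl by simp
    obtain g where g: "g \<in> carrier G" "k = g \<otimes> x \<otimes> inv g \<or> k = g \<otimes> inv x \<otimes> inv g"
      using conjK[OF kl(1) kL] by blast
    have hg: "h g \<in> carrier Q" using g(1) by simp
    from g(2) show "\<exists>g\<in>carrier Q. y = g \<otimes>\<^bsub>Q\<^esub> h x \<otimes>\<^bsub>Q\<^esub> inv\<^bsub>Q\<^esub> g \<or> y = g \<otimes>\<^bsub>Q\<^esub> inv\<^bsub>Q\<^esub> h x \<otimes>\<^bsub>Q\<^esub> inv\<^bsub>Q\<^esub> g"
    proof
      assume "k = g \<otimes> x \<otimes> inv g"
      then have "y = h g \<otimes>\<^bsub>Q\<^esub> h x \<otimes>\<^bsub>Q\<^esub> inv\<^bsub>Q\<^esub> h g" using d(2) hd g(1) xG by simp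
      then show ?thesis using hg by blast
    next
      assume "k = g \<otimes> inv x \<otimes> inv g"
      then have "y = h g \<otimes>\<^bsub>Q\<^esub> inv\<^bsub>Q\<^esub> h x \<otimes>\<^bsub>Q\<^esub> inv\<^bsub>Q\<^esub> h g" using d(2) hd g(1) xG by simp
      then show ?thesis using hg by blast
    qed
  qed
  show False by (rule group.lemmaA[OF grpQ finQ NQ perfQ ntQ hxN covQ])
qed

end

theorem proposition1p1:
  fixes G :: "('a, 'b) monoid_scheme"
  assumes "group G" and "finite (carrier G)" and "magnus_property G"
  shows "solvable G"
  using group.main_solvable[OF assms] .

end
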